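(* For $n\ge1$, $\lambda_n'(a)=\sum_{k=1}^{n-1}k\,\lambda_{n-k}(a)\lambda_k(a)$; moreover $\lambda_n(0)=(-1)^{n-1}/n$ and $\lambda_1(a)=1$.
   Context: Let $L(a,t)=\sum_{n\ge1}\lambda_n(a)t^n\in\mathbb Q[a][[t]]$ be the compositional inverse (in $t$) of $e^{-at}(e^t-1)$, equivalently the unique such series with $e^{L(a,t)}(1-te^{(a-1)L(a,t)})=1$. $\lambda_n'$ denotes the derivative in $a$. *)

theory Defs
  imports Complex_Main "HOL-Computational_Algebra.Formal_Power_Series"
begin

definition gen_series :: "real \<Rightarrow> real fps" where
  "gen_series a = fps_exp (- a) * (fps_exp 1 - 1)"

definition lam :: "real \<Rightarrow> nat \<Rightarrow> real" where
  "lam a n = fps_nth (fps_inv (gen_series a)) n"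

end

theory Submission imports Defs begin
unbundle fps_syntax

definition fder :: "(real \<Rightarrow> real fps) \<Rightarrow> real \<Rightarrow> real fps \<Rightarrow> bool" where
  "fder F a D \<longleftrightarrow> (\<forall>n. ((\<lambda>b. F b $ n) has_real_derivative D $ n) (at a))"

lemma fder_const: "fder (\<lambda>b. C) a 0"
  unfolding fder_def by simp

lemma fder_add: "fder F a Fd \<Longrightarrow> fder H a Hd \<Longrightarrow> fder (\<lambda>b. F b + H b) a (Fd + Hd)"
  unfolding fder_def by (auto intro!: derivative_eq_intros)

lemma fder_minus: "fder F a Fd \<Longrightarrow> fder (\<lambda>b. - F b) a (- Fd)"
  unfolding fder_def by (auto intro!: derivative_eq_intros)

lemma fder_mult: "fder F a Fd \<Longrightarrow> fder H a Hd \<Longrightarrow> fder (\<lambda>b. F b * H b) a (Fd * H a + F a * Hd)"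
  unfolding fder_def
proof (intro allI impI)
  fix n assume F: "\<forall>n. ((\<lambda>b. F b $ n) has_real_derivative Fd $ n) (at a)"
    and H: "\<forall>n. ((\<lambda>b. H b $ n) has_real_derivative Hd $ n) (at a)"
  have e: "(Fd * H a + F a * Hd)$n = (\<Sum>i=0..n. F a$i * Hd$(n-i) + Fd$i * H a$(n-i))"
    by (simp add: fps_mult_nth sum.distrib add.commute)
  show "((\<lambda>b. (F b * H b) $ n) has_real_derivative (Fd * H a + F a * Hd) $ n) (at a)"
    unfolding e fps_mult_nth
    using F H by (intro DERIV_sum DERIV_mult') auto
qed

lemma fder_power: "fder F a Fd \<Longrightarrow> fder (\<lambda>b. F b ^ k) a (of_nat k * F a ^ (k - 1) * Fd)"
proof (induction k)
  case 0 then show ?case using fder_const[of 1 a] by simp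
next
  case (Suc k)
  have "fder (\<lambda>b. F b * F b ^ k) a (Fd * F a ^ k + F a * (of_nat k * F a ^ (k - 1) * Fd))"
    by (rule fder_mult[OF Suc.prems Suc.IH[OF Suc.prems]])
  moreover have "Fd * F a ^ k + F a * (of_nat k * F a ^ (k - 1) * Fd)
     = of_nat (Suc k) * F a ^ (Suc k - 1) * Fd"
  proof (cases k)
    case 0 then show ?thesis by simp
  next
    case (Suc m)
    then show ?thesis by (simp add: algebra_simps)
  qed
  ultimately show ?case by simp
qed

lemma fder_unique: "fder F a D1 \<Longrightarrow> fder F a D2 \<Longrightarrow> D1 = D2"
  unfolding fder_def by (intro fps_ext) (blast intro: DERIV_unique)

lemma comp_aux:
  fixes G L Ld :: "real fps"
  assumes L0: "L$0 = 0" and D0: "Ld$0 = 0"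
  shows "(\<Sum>i=0..n. G$i * (of_nat i * L^(i-1) * Ld)$n) = ((fps_deriv G oo L) * Ld)$n"
proof -
  have z: "(L^n * Ld) $ n = 0"
  proof -
    have "(L^n * Ld) $ n = (\<Sum>j=0..n. (L^n)$j * Ld$(n-j))" by (simp add: fps_mult_nth)
    also have "\<dots> = 0"
      using startsby_zero_power_prefix[OF L0, of n] D0
      by (intro sum.neutral) (metis atLeastAtMost_iff diff_self_eq_0 le_neq_implies_less mult_eq_0_iff)
    finally show ?thesis .
  qed
  have "(\<Sum>i=0..n. G$i * (of_nat i * L^(i-1) * Ld)$n)
      = (\<Sum>i=0..Suc n. G$i * (of_nat i * L^(i-1) * Ld)$n)"
    using z by (simp add: mult.assoc fps_of_nat[symmetric])
  also have "\<dots> = (\<Sum>i=0..n. G$Suc i * (of_nat (Suc i) * L^i * Ld)$n)"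
    by (subst sum.atLeast0_atMost_Suc_shift) simp
  also have "\<dots> = (\<Sum>i=0..n. fps_deriv G $ i * (L^i * Ld)$n)"
    by (intro sum.cong) (auto simp: mult.assoc fps_of_nat[symmetric])
  also have "\<dots> = (\<Sum>i=0..n. \<Sum>j=0..n. fps_deriv G $ i * (L^i)$j * Ld$(n-j))"
    by (simp add: fps_mult_nth sum_distrib_left mult.assoc)
  also have "\<dots> = (\<Sum>j=0..n. \<Sum>i=0..n. fps_deriv G $ i * (L^i)$j * Ld$(n-j))"
    by (rule sum.swap)
  also have "\<dots> = (\<Sum>j=0..n. (\<Sum>i=0..j. fps_deriv G $ i * (L^i)$j) * Ld$(n-j))"
  proof (intro sum.cong refl)
    fix j assume j: "j \<in> {0..n}"
    have "(\<Sum>i=0..n. fps_deriv G $ i * (L^i)$j * Ld$(n-j)) = (\<Sum>i=0..j. fps_deriv G $ i * (L^i)$j * Ld$(n-j))"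
      using j startsby_zero_power_prefix[OF L0]
      by (intro sum.mono_neutral_right) auto
    then show "(\<Sum>i=0..n. fps_deriv G $ i * (L^i)$j * Ld$(n-j)) = (\<Sum>i=0..j. fps_deriv G $ i * (L^i)$j) * Ld$(n-j)"
      by (simp add: sum_distrib_right)
  qed
  also have "\<dots> = ((fps_deriv G oo L) * Ld)$n"
    by (simp add: fps_mult_nth fps_compose_nth)
  finally show ?thesis .
qed

lemma fder_compose:
  assumes L0: "\<And>b. L b $ 0 = 0" and G: "fder G a Gd" and L: "fder L a Ld"
  shows "fder (\<lambda>b. G b oo L b) a ((Gd oo L a) + (fps_deriv (G a) oo L a) * Ld)"
  unfolding fder_def
proof
  fix n
  have Ld0: "Ld $ 0 = 0"
  proof -
    have "((\<lambda>b. L b $ 0) has_real_derivative Ld $ 0) (at a)" using L unfolding fder_def by blast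
    then have "((\<lambda>b. 0) has_real_derivative Ld $ 0) (at a)" using L0 by simp
    then show ?thesis using DERIV_const DERIV_unique by blast
  qed
  have P: "((\<lambda>b. (L b ^ i) $ n) has_real_derivative (of_nat i * L a ^ (i - 1) * Ld) $ n) (at a)" for i
    using fder_power[OF L, of i] unfolding fder_def by blast
  have Gn: "((\<lambda>b. G b $ i) has_real_derivative Gd $ i) (at a)" for i
    using G unfolding fder_def by blast
  have e: "((Gd oo L a) + (fps_deriv (G a) oo L a) * Ld) $ n
     = (\<Sum>i=0..n. G a $ i * (of_nat i * L a ^ (i - 1) * Ld) $ n + Gd $ i * (L a ^ i) $ n)"
    using comp_aux[OF L0[of a] Ld0, where G="G a" and n=n]
    by (simp add: sum.distrib fps_compose_nth add.commute)
  show "((\<lambda>b. (G b oo L b) $ n) has_real_derivative ((Gd oo L a) + (fps_deriv (G a) oo L a) * Ld) $ n) (at a)"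
    unfolding e fps_compose_nth
    using Gn P by (intro DERIV_sum DERIV_mult') auto
qed

lemma G0: "gen_series b $ 0 = 0"
  by (simp add: gen_series_def)

lemma G1: "gen_series b $ 1 = 1"
  by (simp add: gen_series_def fps_mult_nth)

lemma G1': "gen_series b $ Suc 0 = 1"
  using G1 by simp

lemma fder_exp: "fder (\<lambda>b. fps_exp (- b)) a (- (fps_X * fps_exp (- a)))"
  unfolding fder_def
proof
  fix n
  show "((\<lambda>b. fps_exp (- b) $ n) has_real_derivative (- (fps_X * fps_exp (- a))) $ n) (at a)"
  proof (cases n)
    case 0 then show ?thesis by simp
  next
    case (Suc m)
    have d1: "((\<lambda>b. - b) has_real_derivative -1) (at a)" by (auto intro!: derivative_eq_intros)
    have "((\<lambda>b. (- b) ^ Suc m / fact (Suc m)) has_real_derivative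
            (of_nat (Suc m) * (-1 * (- a) ^ (Suc m - Suc 0))) / fact (Suc m)) (at a)"
      by (rule DERIV_cdivide[OF DERIV_power[OF d1]])
    moreover have "(of_nat (Suc m) * (-1 * (- a) ^ (Suc m - Suc 0))) / fact (Suc m) = - ((- a) ^ m / fact m)"
      by (simp add: fact_Suc field_simps del: of_nat_Suc)
    ultimately have d: "((\<lambda>b. (- b) ^ Suc m / fact (Suc m)) has_real_derivative - ((- a) ^ m / fact m)) (at a)"
      by simp
    have e1: "(\<lambda>b. fps_exp (- b) $ n) = (\<lambda>b. (- b) ^ Suc m / fact (Suc m))"
      using Suc by (simp only: fps_exp_nth of_nat_fact)
    have e2: "(- (fps_X * fps_exp (- a))) $ n = - ((- a) ^ m / fact m)"
      using Suc by simp
    show ?thesis unfolding e1 e2 by (rule d)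
  qed
qed

lemma fder_G: "fder gen_series a (- (fps_X * gen_series a))"
proof -
  have "fder (\<lambda>b. fps_exp (- b) * (fps_exp 1 - 1)) a
          ((- (fps_X * fps_exp (- a))) * (fps_exp 1 - 1) + fps_exp (- a) * 0)"
    by (rule fder_mult[OF fder_exp fder_const])
  then show ?thesis
    by (simp add: gen_series_def[abs_def] mult.assoc)
qed

lemma lam0: "lam b 0 = 0"
  by (simp add: lam_def fps_inv_def)

lemma lam_Suc: "lam b (Suc m) = fps_X $ Suc m - (\<Sum>i=0..m. lam b i * (gen_series b ^ i) $ Suc m)"
  by (simp add: lam_def fps_inv_def G1' del: power_Suc)

lemma lam_diff: "(\<lambda>b. lam b n) differentiable (at a)"
proof (induction n rule: less_induct)
  case (less n)
  show ?case
  proof (cases n)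
    case 0 then show ?thesis by (simp add: lam0)
  next
    case (Suc m)
    have P: "(\<lambda>b. (gen_series b ^ i) $ k) differentiable (at a)" for i k
      using fder_power[OF fder_G, of i] unfolding fder_def real_differentiable_def by blast
    have "(\<lambda>b. fps_X $ Suc m - (\<Sum>i=0..m. lam b i * (gen_series b ^ i) $ Suc m)) differentiable (at a)"
      using less Suc P by (intro differentiable_diff differentiable_const differentiable_sum differentiable_mult) auto
    then show ?thesis using Suc by (simp add: lam_Suc)
  qed
qed

lemma L0: "fps_inv (gen_series b) $ 0 = 0"
  by (simp add: fps_inv_def)

lemma GL: "gen_series b oo fps_inv (gen_series b) = fps_X"
  by (rule fps_inv_right) (simp_all add: G0 G1')

lemma main_deriv:
  fixes a :: real
  defines "L \<equiv> fps_inv (gen_series a)"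
  defines "D \<equiv> Abs_fps (\<lambda>n. SOME d. ((\<lambda>b. lam b n) has_real_derivative d) (at a))"
  shows "fder (\<lambda>b. fps_inv (gen_series b)) a D" "D = fps_X * (L * fps_deriv L)"
proof -
  show fL: "fder (\<lambda>b. fps_inv (gen_series b)) a D"
    unfolding fder_def
  proof
    fix n
    obtain d where d: "((\<lambda>b. lam b n) has_real_derivative d) (at a)"
      using lam_diff[of n a] unfolding real_differentiable_def by blast
    then have "(SOME d. ((\<lambda>b. lam b n) has_real_derivative d) (at a)) = d"
      by (metis (mono_tags, lifting) DERIV_unique someI)
    then show "((\<lambda>b. fps_inv (gen_series b) $ n) has_real_derivative D $ n) (at a)"
      using d by (simp add: D_def lam_def)
  qed
  have c: "fder (\<lambda>b. gen_series b oo fps_inv (gen_series b)) a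
      (((- (fps_X * gen_series a)) oo L) + (fps_deriv (gen_series a) oo L) * D)"
    unfolding L_def by (rule fder_compose[OF L0 fder_G fL])
  have "fder (\<lambda>b. gen_series b oo fps_inv (gen_series b)) a 0"
    unfolding GL by (rule fder_const)
  from fder_unique[OF c this]
  have eq: "((- (fps_X * gen_series a)) oo L) + (fps_deriv (gen_series a) oo L) * D = 0" .
  have La0: "L $ 0 = 0" unfolding L_def by (rule L0)
  have m: "(fps_X * gen_series a) oo L = (fps_X oo L) * (gen_series a oo L)"
    by (rule fps_compose_mult_distrib[OF La0])
  have "(- (fps_X * gen_series a)) oo L = - (L * fps_X)"
    unfolding fps_compose_uminus m fps_X_fps_compose_startby0[OF La0]
    by (simp add: L_def GL)
  with eq have eq2: "(fps_deriv (gen_series a) oo L) * D = L * fps_X"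
    by (simp add: add_eq_0_iff)
  have "fps_deriv (gen_series a oo L) = (fps_deriv (gen_series a) oo L) * fps_deriv L"
    by (rule fps_compose_deriv[OF La0])
  then have inv: "(fps_deriv (gen_series a) oo L) * fps_deriv L = 1"
    by (simp add: L_def GL)
  have "D = ((fps_deriv (gen_series a) oo L) * fps_deriv L) * D" by (simp add: inv)
  also have "\<dots> = fps_deriv L * ((fps_deriv (gen_series a) oo L) * D)" by (simp add: ac_simps)
  also have "\<dots> = fps_deriv L * (L * fps_X)" by (simp only: eq2)
  also have "\<dots> = fps_X * (L * fps_deriv L)" by (simp only: ac_simps)
  finally show "D = fps_X * (L * fps_deriv L)" .
qed

theorem lemma6p8:
  fixes n :: nat and a :: real
  assumes "n \<ge> 1"
  shows "((\<lambda>b. lam b n) has_real_derivative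
            (\<Sum>k=1..n-1. real k * lam a (n - k) * lam a k)) (at a)
         \<and> lam 0 n = (-1) ^ (n - 1) / real n
         \<and> lam a 1 = 1"
proof (intro conjI)
  obtain m where n: "n = Suc m" using assms by (cases n) auto
  define L where "L = fps_inv (gen_series a)"
  define D where "D = Abs_fps (\<lambda>n. SOME d. ((\<lambda>b. lam b n) has_real_derivative d) (at a))"
  have fL: "fder (\<lambda>b. fps_inv (gen_series b)) a D" and DL: "D = fps_X * (L * fps_deriv L)"
    using main_deriv[of a] unfolding L_def D_def by blast+
  have d: "((\<lambda>b. lam b n) has_real_derivative D $ n) (at a)"
    using fL unfolding fder_def by (simp add: lam_def[abs_def])
  have La: "L $ i = lam a i" for i by (simp add: L_def lam_def)
  have "D $ n = (L * fps_deriv L) $ m"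
    by (simp add: DL n)
  also have "\<dots> = (\<Sum>i=0..m. L$i * (of_nat (m - i + 1) * L$(m - i + 1)))"
    unfolding fps_mult_nth fps_deriv_nth ..
  also have "\<dots> = (\<Sum>i=Suc 0..m. L$i * (of_nat (m - i + 1) * L$(m - i + 1)))"
    by (simp add: sum.atLeast_Suc_atMost La lam0)
  also have "\<dots> = (\<Sum>k=1..n-1. real k * lam a (n - k) * lam a k)"
    unfolding n by (subst (2) sum.atLeastAtMost_rev) (auto simp: La Suc_diff_le of_nat_diff intro!: sum.cong)
  finally show "((\<lambda>b. lam b n) has_real_derivative
            (\<Sum>k=1..n-1. real k * lam a (n - k) * lam a k)) (at a)"
    using d by simp
  show "lam 0 n = (-1) ^ (n - 1) / real n"
    using assms fps_ln_fps_exp_inv[of "1::real"]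
    by (simp add: lam_def gen_series_def fps_ln_nth flip: fps_ln_fps_exp_inv)
  show "lam a 1 = 1"
    using lam_Suc[of a 0] by (simp add: lam0)
qed

end
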